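(* Let $V\subset\mathbb{R}^d$ be a finite set of points, let $\varepsilon>0$, $c>1$ and let $k\ge 1$ be an integer. Let $S$ be a set of edges (unordered pairs of distinct points of $V$), partitioned as $S=S_0\cup S_1\cup\dots\cup S_{k-1}$, where $S_i$ is the set of edges of $S$ of index $i$. Suppose that Invariant 1 holds for every $S_i$, $0\le i\le k-1$. Then $S$, viewed as a graph on $V$ in which each edge $\{x,y\}$ has weight $\lVert xy\rVert$, is a $(1+\varepsilon)$-spanner of $V$: for all $u,v\in V$, the shortest-path distance $d_S(u,v)$ in $S$ satisfies $d_S(u,v)\le(1+\varepsilon)\lVert uv\rVert$.
   Context: $\lVert xy\rVert$ denotes the Euclidean distance between $x,y\in\mathbb{R}^d$. For distinct $u,v$, the index of the pair is $\operatorname{index}(u,v)=\lfloor \log_c\lVert uv\rVert\rfloor \bmod k$; the index of an edge is the index of its endpoint pair. Invariant 1 for $S_i$: for every pair $\{u,v\}$ of distinct points of $V$ with $\operatorname{index}(u,v)=i$ and $\{u,v\}\notin S_i$, there exist $l\ge 1$ and edges $\{x_1,y_1\},\dots,\{x_l,y_l\}\in S_i$ (each written with some ordering of its endpoints) such that $$\sum_{m=1}^l \lVert x_my_m\rVert+(1+\varepsilon)\Big(\lVert ux_1\rVert+\sum_{m=1}^{l-1}\lVert y_mx_{m+1}\rVert+\lVert y_lv\rVert\Big)<(1+\varepsilon)\lVert uv\rVert .$$ *)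

theory Defs
  imports "HOL-Analysis.Analysis"
begin

definition pair_index :: "real \<Rightarrow> nat \<Rightarrow> 'a::euclidean_space \<Rightarrow> 'a \<Rightarrow> nat" where
  "pair_index c k u v = nat (\<lfloor>log c (dist u v)\<rfloor> mod int k)"

definition edges_of_index :: "real \<Rightarrow> nat \<Rightarrow> 'a::euclidean_space set set \<Rightarrow> nat \<Rightarrow> 'a set set" where
  "edges_of_index c k S i = {e \<in> S. \<exists>x y. e = {x, y} \<and> x \<noteq> y \<and> pair_index c k x y = i}"

definition invariant1 :: "real \<Rightarrow> nat \<Rightarrow> real \<Rightarrow> 'a::euclidean_space set \<Rightarrow> 'a set set \<Rightarrow> nat \<Rightarrow> bool" where
  "invariant1 c k \<epsilon> V Si i \<longleftrightarrow>
    (\<forall>u\<in>V. \<forall>v\<in>V. u \<noteq> v \<and> pair_index c k u v = i \<and> {u, v} \<notin> Si \<longrightarrow>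
      (\<exists>es :: ('a \<times> 'a) list. es \<noteq> [] \<and> (\<forall>(x, y) \<in> set es. {x, y} \<in> Si) \<and>
        (\<Sum>m<length es. dist (fst (es ! m)) (snd (es ! m)))
        + (1 + \<epsilon>) * (dist u (fst (es ! 0))
            + (\<Sum>m<length es - 1. dist (snd (es ! m)) (fst (es ! (m + 1))))
            + dist (snd (last es)) v)
        < (1 + \<epsilon>) * dist u v))"

definition is_walk :: "'a set set \<Rightarrow> 'a list \<Rightarrow> bool" where
  "is_walk S ps \<longleftrightarrow> ps \<noteq> [] \<and> (\<forall>j < length ps - 1. {ps ! j, ps ! (j + 1)} \<in> S)"

definition walk_length :: "'a::euclidean_space list \<Rightarrow> real" where
  "walk_length ps = (\<Sum>j < length ps - 1. dist (ps ! j) (ps ! (j + 1)))"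

text \<open>Shortest-path distance d_S(u,v) (infinite if no path).\<close>
definition graph_dist :: "'a::euclidean_space set set \<Rightarrow> 'a \<Rightarrow> 'a \<Rightarrow> ereal" where
  "graph_dist S u v = (INF ps \<in> {ps. is_walk S ps \<and> hd ps = u \<and> last ps = v}. ereal (walk_length ps))"

end

theory Submission
  imports Defs
begin

definition reach :: "'a::euclidean_space set set \<Rightarrow> 'a \<Rightarrow> 'a \<Rightarrow> real \<Rightarrow> bool" where
  "reach S u v r \<longleftrightarrow> (\<exists>ps. is_walk S ps \<and> hd ps = u \<and> last ps = v \<and> walk_length ps \<le> r)"

lemma wl_single[simp]: "walk_length [a] = 0"
  by (simp add: walk_length_def)

lemma wl_cons2[simp]: "walk_length (a # b # rest) = dist a b + walk_length (b # rest)"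
  unfolding walk_length_def by (simp del: sum.lessThan_Suc add: sum.lessThan_Suc_shift)

lemma iw_single[simp]: "is_walk S [a]"
  by (simp add: is_walk_def)

lemma iw_cons2[simp]: "is_walk S (a # b # rest) \<longleftrightarrow> {a, b} \<in> S \<and> is_walk S (b # rest)"
  unfolding is_walk_def by (auto simp: less_Suc_eq_0_disj)

lemma walk_append:
  "is_walk S ps \<Longrightarrow> is_walk S qs \<Longrightarrow> last ps = hd qs \<Longrightarrow>
   is_walk S (ps @ tl qs) \<and> hd (ps @ tl qs) = hd ps \<and> last (ps @ tl qs) = last qs
   \<and> walk_length (ps @ tl qs) = walk_length ps + walk_length qs"
proof (induction ps rule: induct_list012)
  case 1
  then show ?case by (simp add: is_walk_def)
next
  case (2 x)
  then show ?case by (cases qs) (auto simp: is_walk_def)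
next
  case (3 x y zs)
  then show ?case by auto
qed

lemma reach_refl: "reach S u u 0"
  unfolding reach_def by (rule exI[of _ "[u]"]) simp

lemma reach_edge: "{u, v} \<in> S \<Longrightarrow> reach S u v (dist u v)"
  unfolding reach_def by (rule exI[of _ "[u, v]"]) simp

lemma reach_trans: "reach S u v a \<Longrightarrow> reach S v w b \<Longrightarrow> reach S u w (a + b)"
  unfolding reach_def
proof (elim exE conjE)
  fix ps qs assume *: "is_walk S ps" "hd ps = u" "last ps = v" "walk_length ps \<le> a"
    "is_walk S qs" "hd qs = v" "last qs = w" "walk_length qs \<le> b"
  have "is_walk S (ps @ tl qs) \<and> hd (ps @ tl qs) = hd ps \<and> last (ps @ tl qs) = last qs
   \<and> walk_length (ps @ tl qs) = walk_length ps + walk_length qs"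
    using walk_append[of S ps qs] * by simp
  then show "\<exists>ps. is_walk S ps \<and> hd ps = u \<and> last ps = w \<and> walk_length ps \<le> a + b"
    using * by (intro exI[of _ "ps @ tl qs"]) auto
qed

lemma reach_mono: "reach S u v a \<Longrightarrow> a \<le> b \<Longrightarrow> reach S u v b"
  unfolding reach_def by force

lemma reach_graph_dist: "reach S u v r \<Longrightarrow> graph_dist S u v \<le> ereal r"
  unfolding reach_def graph_dist_def
  by (auto intro: INF_lower2)

definition esum :: "('a::euclidean_space \<times> 'a) list \<Rightarrow> real" where
  "esum es = (\<Sum>m<length es. dist (fst (es ! m)) (snd (es ! m)))"

definition gsum :: "('a::euclidean_space \<times> 'a) list \<Rightarrow> real" where
  "gsum es = (\<Sum>m<length es - 1. dist (snd (es ! m)) (fst (es ! (m + 1))))"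

lemma esum_cons: "esum ((x, y) # rest) = dist x y + esum rest"
  unfolding esum_def by (simp del: sum.lessThan_Suc add: sum.lessThan_Suc_shift)

lemma gsum_single: "gsum [p] = 0"
  unfolding gsum_def by simp

lemma gsum_cons: "rest \<noteq> [] \<Longrightarrow> gsum ((x, y) # rest) = dist y (fst (rest ! 0)) + gsum rest"
proof -
  assume "rest \<noteq> []"
  then obtain n where n: "length rest = Suc n" by (cases rest) auto
  show ?thesis unfolding gsum_def using n by (simp del: sum.lessThan_Suc add: sum.lessThan_Suc_shift)
qed

lemma gsum_nonneg: "gsum es \<ge> 0"
  unfolding gsum_def by (rule sum_nonneg) simp

lemma chain:
  assumes SV: "\<forall>x y. {x, y} \<in> S \<longrightarrow> x \<in> V \<and> y \<in> V"
    and H: "\<forall>a\<in>V. \<forall>b\<in>V. dist a b < D \<longrightarrow> reach S a b ((1 + \<epsilon>) * dist a b)"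
  shows "es \<noteq> [] \<Longrightarrow> \<forall>(x, y)\<in>set es. {x, y} \<in> S \<Longrightarrow> u \<in> V \<Longrightarrow> v \<in> V \<Longrightarrow>
    dist u (fst (es ! 0)) + gsum es + dist (snd (last es)) v < D \<Longrightarrow>
    reach S u v (esum es + (1 + \<epsilon>) * (dist u (fst (es ! 0)) + gsum es + dist (snd (last es)) v))"
proof (induction es arbitrary: u)
  case Nil
  then show ?case by simp
next
  case (Cons p rest)
  obtain x y where p: "p = (x, y)" by (cases p)
  have xy: "{x, y} \<in> S" using Cons.prems p by auto
  then have xV: "x \<in> V" and yV: "y \<in> V" using SV by auto
  have rux: "reach S u x ((1 + \<epsilon>) * dist u x)"
  proof -
    have "dist u (fst ((p#rest)!0)) = dist u x" using p by simp
    then have "dist u x < D" using Cons.prems(5) gsum_nonneg[of "p # rest"]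
      zero_le_dist[of "snd (last (p # rest))" v] by linarith
    then show ?thesis using H Cons.prems(3) xV by auto
  qed
  have rxy: "reach S x y (dist x y)" using reach_edge[OF xy] .
  show ?case
  proof (cases "rest = []")
    case True
    have "dist u (fst ((p # rest) ! 0)) + gsum (p # rest) + dist (snd (last (p # rest))) v
      = dist u x + dist y v" using p True gsum_single[of p] by simp
    then have "dist y v < D" using Cons.prems(5) zero_le_dist[of u x] by linarith
    then have ryv: "reach S y v ((1 + \<epsilon>) * dist y v)" using H yV Cons.prems(4) by auto
    have "reach S u v ((1 + \<epsilon>) * dist u x + dist x y + (1 + \<epsilon>) * dist y v)"
      by (rule reach_trans[OF reach_trans[OF rux rxy] ryv])
    then show ?thesis using True p
      by (simp add: gsum_single esum_cons esum_def algebra_simps)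
  next
    case False
    let ?G' = "dist y (fst (rest ! 0)) + gsum rest + dist (snd (last rest)) v"
    have eqG: "dist u (fst ((p # rest) ! 0)) + gsum (p # rest) + dist (snd (last (p # rest))) v
       = dist u x + ?G'" using False p by (simp add: gsum_cons)
    have "?G' < D" using Cons.prems(5) eqG zero_le_dist[of u x] by linarith
    then have ryv: "reach S y v (esum rest + (1 + \<epsilon>) * ?G')"
      using Cons.IH[of y] False Cons.prems yV by auto
    have "reach S u v ((1 + \<epsilon>) * dist u x + dist x y + (esum rest + (1 + \<epsilon>) * ?G'))"
      by (rule reach_trans[OF reach_trans[OF rux rxy] ryv])
    then show ?thesis using eqG p
      by (simp add: esum_cons algebra_simps)
  qed
qed

theorem lemma1:
  fixes V :: "'a::euclidean_space set" and S :: "'a set set"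
    and \<epsilon> c :: real and k :: nat
  assumes "finite V" and "\<epsilon> > 0" and "c > 1" and "k \<ge> 1"
    and "\<forall>e\<in>S. \<exists>x\<in>V. \<exists>y\<in>V. x \<noteq> y \<and> e = {x, y}"
    and "\<forall>i<k. invariant1 c k \<epsilon> V (edges_of_index c k S i) i"
  shows "\<forall>u\<in>V. \<forall>v\<in>V. graph_dist S u v \<le> ereal ((1 + \<epsilon>) * dist u v)"
proof -
  have SV: "\<forall>x y. {x, y} \<in> S \<longrightarrow> x \<in> V \<and> y \<in> V \<and> x \<noteq> y"
    using assms(5) by (metis doubleton_eq_iff)
  define cnt where "cnt (u::'a) v = card {q \<in> V \<times> V. dist (fst q) (snd q) < dist u v}" for u v
  have fin: "finite (V \<times> V)" using assms(1) by simp
  have main: "\<forall>u\<in>V. \<forall>v\<in>V. cnt u v = n \<longrightarrow> reach S u v ((1 + \<epsilon>) * dist u v)" for n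
  proof (induction n rule: less_induct)
    case (less n)
    show ?case
    proof (intro ballI impI)
      fix u v :: 'a assume uV: "u \<in> V" and vV: "v \<in> V" and cn: "cnt u v = n"
      have H: "\<forall>a\<in>V. \<forall>b\<in>V. dist a b < dist u v \<longrightarrow> reach S a b ((1 + \<epsilon>) * dist a b)"
      proof (intro ballI impI)
        fix a b :: 'a assume aV: "a \<in> V" and bV: "b \<in> V" and d: "dist a b < dist u v"
        have "{q \<in> V \<times> V. dist (fst q) (snd q) < dist a b}
              \<subset> {q \<in> V \<times> V. dist (fst q) (snd q) < dist u v}"
        proof
          show "{q \<in> V \<times> V. dist (fst q) (snd q) < dist a b}
              \<subseteq> {q \<in> V \<times> V. dist (fst q) (snd q) < dist u v}" using d by auto
          have "(a, b) \<in> {q \<in> V \<times> V. dist (fst q) (snd q) < dist u v}" using d aV bV by auto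
          moreover have "(a, b) \<notin> {q \<in> V \<times> V. dist (fst q) (snd q) < dist a b}" by auto
          ultimately show "{q \<in> V \<times> V. dist (fst q) (snd q) < dist a b}
              \<noteq> {q \<in> V \<times> V. dist (fst q) (snd q) < dist u v}" by blast
        qed
        then have "cnt a b < cnt u v" unfolding cnt_def
          by (rule psubset_card_mono[OF finite_subset[OF _ fin], rotated]) auto
        then show "reach S a b ((1 + \<epsilon>) * dist a b)" using less.IH cn aV bV by auto
      qed
      show "reach S u v ((1 + \<epsilon>) * dist u v)"
      proof (cases "u = v")
        case True
        then show ?thesis using reach_refl[of S v] by simp
      next
        case uv: False
        show ?thesis
        proof (cases "{u, v} \<in> S")
          case True
          have "dist u v \<le> (1 + \<epsilon>) * dist u v" using assms(2) by (simp add: algebra_simps)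
          then show ?thesis using reach_mono[OF reach_edge[OF True]] by blast
        next
          case False
          define i where "i = pair_index c k u v"
          have ik: "i < k" unfolding i_def pair_index_def using assms(4)
            by (simp add: nat_less_iff)
          have sub: "edges_of_index c k S i \<subseteq> S" unfolding edges_of_index_def by auto
          have "invariant1 c k \<epsilon> V (edges_of_index c k S i) i" using assms(6) ik by auto
          then obtain es :: "('a \<times> 'a) list" where es: "es \<noteq> []"
            "\<forall>(x, y) \<in> set es. {x, y} \<in> edges_of_index c k S i"
            "(\<Sum>m<length es. dist (fst (es ! m)) (snd (es ! m)))
              + (1 + \<epsilon>) * (dist u (fst (es ! 0))
              + (\<Sum>m<length es - 1. dist (snd (es ! m)) (fst (es ! (m + 1))))
              + dist (snd (last es)) v) < (1 + \<epsilon>) * dist u v"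
            unfolding invariant1_def using uV vV uv False sub i_def by blast
          have esS: "\<forall>(x, y) \<in> set es. {x, y} \<in> S" using es(2) sub by auto
          let ?G = "dist u (fst (es ! 0)) + gsum es + dist (snd (last es)) v"
          have ineq: "esum es + (1 + \<epsilon>) * ?G < (1 + \<epsilon>) * dist u v"
            using es(3) unfolding esum_def gsum_def by simp
          have "es ! 0 \<in> set es" using es(1) by simp
          then have "{fst (es ! 0), snd (es ! 0)} \<in> S" using esS by (metis (no_types, lifting) case_prod_beta)
          then have pos: "dist (fst (es ! 0)) (snd (es ! 0)) > 0" using SV by auto
          have "dist (fst (es ! 0)) (snd (es ! 0)) \<le> esum es" unfolding esum_def
            using es(1) by (intro member_le_sum) auto
          then have "esum es > 0" using pos by linarith
          then have "(1 + \<epsilon>) * ?G < (1 + \<epsilon>) * dist u v" using ineq by linarith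
          then have Gl: "?G < dist u v" using assms(2) by simp
          have "reach S u v (esum es + (1 + \<epsilon>) * ?G)"
            using chain[of S V "dist u v" \<epsilon> es u v] SV H es(1) esS uV vV Gl by blast
          then show ?thesis using reach_mono ineq by fastforce
        qed
      qed
    qed
  qed
  show ?thesis using main reach_graph_dist by blast
qed

end
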